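(* Let $r\ge2$, $d_1=1$, $\lambda_1=0$, $d_i\ge2$ integers and $\lambda_i>0$ for $i=2,\dots,r$, $n=\sum_id_i$. In the variables $(X_1,\dots,X_r,Y_2,\dots,Y_r)$ consider the system $X_i'=X_i(\mathcal G-1)+\frac{\lambda_iY_i^2}{\sqrt{d_i}}$ ($i=1,\dots,r$), $Y_i'=Y_i\big(\mathcal G-\frac{X_i}{\sqrt{d_i}}\big)$ ($i=2,\dots,r$), where $\mathcal G=\sum_{j=1}^rX_j^2$. Let $\mathcal L=\sum_{i=1}^rX_i^2+\sum_{i=2}^r\lambda_iY_i^2-1$, $\mathcal H=\sum_{i=1}^r\sqrt{d_i}X_i$, $$\mathcal D=\{\mathcal L=0,\ \mathcal H=1\}\cap\{Y_i>0\ (i\ge2),\ |X_1-1|<\sqrt2\},$$ and $$\hat{\mathscr F}=\frac{1-\frac{1}{n-1}(1-X_1)^2}{\prod_{i=2}^r\big(\sqrt{\lambda_i}\,Y_i\big)^{\frac{2d_i}{n-1}}}.$$ Then $\hat{\mathscr F}$ is non-increasing along every trajectory of this system lying in $\mathcal D$. *)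

theory Defs
  imports "HOL-Analysis.Analysis"
begin

text \<open>States: X, Y :: nat \<Rightarrow> real, indices 1..r (Y used only for indices 2..r).\<close>

definition Gfun :: "nat \<Rightarrow> (nat \<Rightarrow> real) \<Rightarrow> real" where
  "Gfun r X = (\<Sum>j=1..r. (X j)\<^sup>2)"

definition Lfun :: "nat \<Rightarrow> (nat \<Rightarrow> real) \<Rightarrow> (nat \<Rightarrow> real) \<Rightarrow> (nat \<Rightarrow> real) \<Rightarrow> real" where
  "Lfun r lam X Y = (\<Sum>i=1..r. (X i)\<^sup>2) + (\<Sum>i=2..r. lam i * (Y i)\<^sup>2) - 1"

definition Hfun :: "nat \<Rightarrow> (nat \<Rightarrow> nat) \<Rightarrow> (nat \<Rightarrow> real) \<Rightarrow> real" where
  "Hfun r d X = (\<Sum>i=1..r. sqrt (real (d i)) * X i)"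

definition inD :: "nat \<Rightarrow> (nat \<Rightarrow> nat) \<Rightarrow> (nat \<Rightarrow> real) \<Rightarrow> (nat \<Rightarrow> real) \<Rightarrow> (nat \<Rightarrow> real) \<Rightarrow> bool" where
  "inD r d lam X Y \<longleftrightarrow> Lfun r lam X Y = 0 \<and> Hfun r d X = 1 \<and>
     (\<forall>i\<in>{2..r}. Y i > 0) \<and> \<bar>X 1 - 1\<bar> < sqrt 2"

definition Fhat :: "nat \<Rightarrow> (nat \<Rightarrow> nat) \<Rightarrow> (nat \<Rightarrow> real) \<Rightarrow> (nat \<Rightarrow> real) \<Rightarrow> (nat \<Rightarrow> real) \<Rightarrow> real" where
  "Fhat r d lam X Y =
     (let n = (\<Sum>i=1..r. d i) in
      (1 - (1 - X 1)\<^sup>2 / (real n - 1)) /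
      (\<Prod>i=2..r. (sqrt (lam i) * Y i) powr (2 * real (d i) / (real n - 1))))"

end

theory Submission
  imports Defs
begin

lemma key:
  fixes N u G Q :: real
  assumes N: "N \<ge> 2" and u2: "u^2 < 2" and cs: "u^2 \<le> N*Q" and G: "G = (1-u)^2 + Q"
  shows "(2*u/N)*((1-u)*(G-1)) - (1 - u^2/N)*((2/N)*(N*G - u)) \<le> 0"
proof -
  have ult: "u < 2"
  proof (rule ccontr)
    assume "\<not> u < 2"
    then have "2*2 \<le> u*u" by (intro mult_mono) auto
    with u2 show False by (simp add: power2_eq_square)
  qed
  have eq: "(2*u/N)*((1-u)*(G-1)) - (1 - u^2/N)*((2/N)*(N*G - u))
      = (2/N^2)*((N-u)*(u^2 - N*G))"
    using N by (simp add: field_simps power2_eq_square)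
  have "G \<ge> Q" using G by simp
  then have "N*Q \<le> N*G" using N by simp
  then have "u^2 \<le> N*G" using cs by linarith
  then have neg: "(N-u)*(u^2 - N*G) \<le> 0" using ult N by (intro mult_nonneg_nonpos) auto
  show ?thesis unfolding eq by (rule mult_nonneg_nonpos[OF _ neg]) (use N in simp)
qed

lemma alg: fixes E a g N u :: real assumes "a = 1 - u"
  shows "(2*(1 - a)/N * (a*(g - 1)))*E + (1 - (1-a)^2/N) * (E * (-((2/N)*(N*g - u))))
     = E*((2*u/N)*((1-u)*(g-1)) - (1 - u^2/N)*((2/N)*(N*g - u)))"
  unfolding assms by (simp add: algebra_simps)

theorem lemma4p2:
  fixes r :: nat and d :: "nat \<Rightarrow> nat" and lam :: "nat \<Rightarrow> real"
    and I :: "real set" and X Y :: "real \<Rightarrow> nat \<Rightarrow> real"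
  assumes r: "r \<ge> 2"
    and d1: "d 1 = 1" and lam1: "lam 1 = 0"
    and d_ge: "\<forall>i\<in>{2..r}. d i \<ge> 2" and lam_pos: "\<forall>i\<in>{2..r}. lam i > 0"
    and I: "is_interval I"
    and odeX: "\<forall>t\<in>I. \<forall>i\<in>{1..r}.
       ((\<lambda>s. X s i) has_real_derivative
          (X t i * (Gfun r (X t) - 1) + lam i * (Y t i)\<^sup>2 / sqrt (real (d i)))) (at t within I)"
    and odeY: "\<forall>t\<in>I. \<forall>i\<in>{2..r}.
       ((\<lambda>s. Y s i) has_real_derivative
          (Y t i * (Gfun r (X t) - X t i / sqrt (real (d i))))) (at t within I)"
    and inD: "\<forall>t\<in>I. inD r d lam (X t) (Y t)"
  shows "\<forall>s\<in>I. \<forall>t\<in>I. s \<le> t \<longrightarrow> Fhat r d lam (X t) (Y t) \<le> Fhat r d lam (X s) (Y s)"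
proof -
  define N where "N = real (\<Sum>i=1..r. d i) - 1"
  have split: "\<And>f::nat\<Rightarrow>'b::comm_monoid_add. (\<Sum>i=1..r. f i) = f 1 + (\<Sum>i=2..r. f i)"
    using sum.atLeast_Suc_atMost[of 1 r] r by (simp add: numeral_2_eq_2)
  have N_eq: "N = (\<Sum>i=2..r. real (d i))"
    using d1 unfolding N_def split[of d] by (simp add: of_nat_sum)
  have "real (d 2) \<le> (\<Sum>i=2..r. real (d i))"
    using r by (intro member_le_sum) auto
  then have N_ge: "N \<ge> 2" using d_ge r N_eq by force
  define c where "c i = 2 * real (d i) / N" for i
  define G where "G t = Gfun r (X t)" for t
  define A where "A t = 1 - (1 - X t 1)^2 / N" for t
  define S where "S t = (\<Sum>i=2..r. c i * ln (sqrt (lam i) * Y t i))" for t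
  have pos: "sqrt (lam i) * Y t i > 0" if "t \<in> I" "i \<in> {2..r}" for t i
    using inD lam_pos that by (auto simp: inD_def)
  have F_eq: "Fhat r d lam (X t) (Y t) = A t * exp (- S t)" if t: "t \<in> I" for t
  proof -
    have "(\<Prod>i=2..r. (sqrt (lam i) * Y t i) powr (2 * real (d i) / (real (\<Sum>i=1..r. d i) - 1))) = exp (S t)"
      unfolding S_def exp_sum[OF finite_atLeastAtMost]
    proof (rule prod.cong)
      fix i assume i: "i \<in> {2..r}"
      have "lam i > 0" "Y t i > 0" using lam_pos inD t i by (auto simp: inD_def)
      then show "(sqrt (lam i) * Y t i) powr (2 * real (d i) / (real (\<Sum>i=1..r. d i) - 1))
          = exp (c i * ln (sqrt (lam i) * Y t i))" by (simp add: powr_def c_def N_def)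
    qed simp
    then show ?thesis by (simp add: Fhat_def Let_def A_def N_def exp_minus divide_inverse)
  qed
  define D where "D t = (2*(1 - X t 1)/N * (X t 1 * (G t - 1))) * exp(- S t)
     + A t * (exp (- S t) * (-(\<Sum>i=2..r. c i * (G t - X t i / sqrt (real (d i))))))" for t
  have deriv: "((\<lambda>s. A s * exp (- S s)) has_real_derivative D t) (at t within I)" if t: "t\<in>I" for t
  proof -
    have dX1: "((\<lambda>s. X s 1) has_real_derivative X t 1 * (G t - 1)) (at t within I)"
      using odeX[rule_format, OF t, of 1] r lam1 by (simp add: G_def)
    have dA: "(A has_real_derivative (2*(1 - X t 1)/N * (X t 1 * (G t - 1)))) (at t within I)"
      unfolding A_def[abs_def]
      apply (rule DERIV_cong)
       apply (rule DERIV_diff DERIV_const DERIV_cdivide DERIV_power dX1)+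
      using N_ge by (simp add: field_simps power2_eq_square)
    have dS: "(S has_real_derivative (\<Sum>i=2..r. c i * (G t - X t i / sqrt (real (d i))))) (at t within I)"
      unfolding S_def[abs_def]
    proof (rule DERIV_sum)
      fix i assume i: "i \<in> {2..r}"
      have dY: "((\<lambda>s. Y s i) has_real_derivative (Y t i * (G t - X t i / sqrt (real (d i))))) (at t within I)"
        using odeY t i by (auto simp: G_def)
      have p: "sqrt (lam i) * Y t i > 0" using pos t i by blast
      have "((\<lambda>s. c i * ln (sqrt (lam i) * Y s i)) has_real_derivative
         c i * ((sqrt (lam i) * (Y t i * (G t - X t i / sqrt (real (d i))))) / (sqrt (lam i) * Y t i))) (at t within I)"
        by (rule derivative_eq_intros dY refl p | simp)+
      moreover have "(sqrt (lam i) * (Y t i * (G t - X t i / sqrt (real (d i))))) / (sqrt (lam i) * Y t i)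
          = G t - X t i / sqrt (real (d i))"
      proof -
        have "lam i > 0" "Y t i > 0" using lam_pos inD t i by (auto simp: inD_def)
        then show ?thesis by simp
      qed
      ultimately show "((\<lambda>s. c i * ln (sqrt (lam i) * Y s i)) has_real_derivative
         c i * (G t - X t i / sqrt (real (d i)))) (at t within I)" by simp
    qed
    show ?thesis unfolding D_def
      by (rule derivative_eq_intros dA dS refl | simp)+
  qed
  have Dle: "D t \<le> 0" if t: "t \<in> I" for t
  proof -
    define u where "u = 1 - X t 1"
    define Q where "Q = (\<Sum>i=2..r. (X t i)^2)"
    have Npos: "N > 0" using N_ge by simp
    have trm: "c i * (G t - X t i / sqrt (real (d i))) = (2/N) * (real (d i) * G t - sqrt (real (d i)) * X t i)"
      if "i \<in> {2..r}" for i
    proof -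
      have e: "real (d i) / sqrt (real (d i)) = sqrt (real (d i))" by (rule real_div_sqrt) simp
      have "c i * (G t - X t i / sqrt (real (d i))) = (2/N) * (real (d i) * G t - (real (d i) / sqrt (real (d i))) * X t i)"
        unfolding c_def by (simp add: algebra_simps)
      then show ?thesis unfolding e .
    qed
    have Hs: "(\<Sum>i=2..r. sqrt (real (d i)) * X t i) = u"
    proof -
      have "Hfun r d (X t) = 1" using inD t by (simp add: inD_def)
      then have "sqrt (real (d 1)) * X t 1 + (\<Sum>i=2..r. sqrt (real (d i)) * X t i) = 1"
        unfolding Hfun_def split[of "\<lambda>i. sqrt (real (d i)) * X t i"] .
      then show ?thesis using d1 by (simp add: u_def)
    qed
    have Sd: "(\<Sum>i=2..r. c i * (G t - X t i / sqrt (real (d i)))) = (2/N)*(N*G t - u)"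
    proof -
      have "(\<Sum>i=2..r. c i * (G t - X t i / sqrt (real (d i))))
         = (2/N) * ((\<Sum>i=2..r. real (d i)) * G t - (\<Sum>i=2..r. sqrt (real (d i)) * X t i))"
      proof -
        have "(\<Sum>i=2..r. c i * (G t - X t i / sqrt (real (d i))))
           = (\<Sum>i=2..r. (2/N) * (real (d i) * G t - sqrt (real (d i)) * X t i))"
          by (rule sum.cong) (simp_all add: trm)
        also have "\<dots> = (2/N) * ((\<Sum>i=2..r. real (d i) * G t) - (\<Sum>i=2..r. sqrt (real (d i)) * X t i))"
          by (simp only: sum_distrib_left[symmetric] sum_subtractf)
        also have "(\<Sum>i=2..r. real (d i) * G t) = (\<Sum>i=2..r. real (d i)) * G t"
          by (simp add: sum_distrib_right)
        finally show ?thesis .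
      qed
      then show ?thesis using Hs N_eq by simp
    qed
    have Gs: "G t = (1-u)^2 + Q"
      unfolding G_def Gfun_def split[of "\<lambda>i. (X t i)^2"] u_def Q_def by simp
    have cs0: "(\<Sum>i=2..r. sqrt (real (d i)) * X t i)^2 \<le> (\<Sum>i=2..r. (sqrt (real (d i)))^2) * (\<Sum>i=2..r. (X t i)^2)"
      by (rule Cauchy_Schwarz_ineq_sum)
    have cs: "u^2 \<le> N * Q" using cs0 unfolding Hs Q_def N_eq by simp
    have "\<bar>X t 1 - 1\<bar> < sqrt 2" using inD t unfolding inD_def by blast
    then have "\<bar>u\<bar> < sqrt 2" unfolding u_def by (metis abs_minus_commute)
    then have "\<bar>u\<bar>^2 < (sqrt 2)^2" by (intro power_strict_mono) auto
    then have u2: "u^2 < 2" by simp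
    have k: "(2*u/N)*((1-u)*(G t-1)) - (1 - u^2/N)*((2/N)*(N*G t - u)) \<le> 0"
      by (rule key[OF N_ge u2 cs Gs])
    have "D t = exp (- S t) * ((2*u/N)*((1-u)*(G t-1)) - (1 - u^2/N)*((2/N)*(N*G t - u)))"
    proof -
      have x1: "X t 1 = 1 - u" unfolding u_def by simp
      show ?thesis unfolding D_def Sd A_def by (rule alg[OF x1])
    qed
    then show ?thesis by (simp only:) (rule mult_nonneg_nonpos[OF _ k], simp)
  qed
  show ?thesis
  proof (intro ballI impI)
    fix s t assume s: "s \<in> I" and t: "t \<in> I" and st: "s \<le> t"
    have sub: "{s..t} \<subseteq> I" using I s t unfolding is_interval_1 by (meson atLeastAtMost_iff subsetI)
    have cont: "continuous_on I (\<lambda>s. A s * exp (- S s))"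
      by (rule DERIV_continuous_on, rule deriv)
    have "A t * exp (- S t) \<le> A s * exp (- S s)"
    proof (rule DERIV_nonpos_imp_decreasing_open[OF st, where f="\<lambda>s. A s * exp (- S s)"])
      fix x assume x: "s < x" "x < t"
      have "{s<..<t} \<subseteq> interior I" by (rule interior_maximal) (use sub in auto)
      then have xint: "x \<in> interior I" using x by auto
      have xI: "x \<in> I" using sub x by auto
      have "((\<lambda>s. A s * exp (- S s)) has_real_derivative D x) (at x)"
        using deriv[OF xI] unfolding at_within_interior[OF xint] .
      then show "\<exists>y. ((\<lambda>s. A s * exp (- S s)) has_real_derivative y) (at x) \<and> y \<le> 0"
        using Dle[OF xI] by blast
    next
      show "continuous_on {s..t} (\<lambda>s. A s * exp (- S s))" using cont sub continuous_on_subset by blast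
    qed
    then show "Fhat r d lam (X t) (Y t) \<le> Fhat r d lam (X s) (Y s)" by (simp only: F_eq[OF s] F_eq[OF t])
  qed
qed

end
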